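(* Let $(r_n)_{n\ge1}$ be the unique sequence of positive reals satisfying $r_n=2n-1+\dfrac{n^2}{r_{n+1}}$ for all $n\ge1$ (equivalently $r_1=4/\pi$ and $r_{n+1}=n^2/(r_n-(2n-1))$). Then for all $n\ge1$, $$\Big\lfloor r_n+\tfrac12\Big\rfloor=\Big\lfloor (1+\sqrt2)\,n-\tfrac12\sqrt2\Big\rfloor.$$ *)

theory Defs
  imports Complex_Main
begin

end

theory Submission imports Defs begin
lemma Uid:
  fixes n :: nat and a :: real
  assumes a2: "a*a = 2*a+1" and ap: "a > 0"
  shows "a*(2*real n-1)/2 + 1/(2*a*(2*real n+1)) = 2*real n - 1 + (real n)^2 / (a*(2*real (n+1) - 1)/2)"
proof -
  have p: "a * 2 + a * (real n * 4) > 0" "a + a * (real n * 2) > 0" using ap by (auto intro!: add_pos_nonneg)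
  have q: "2*real(n+1) - 1 = 2*real n + 1" by simp
  show ?thesis unfolding q using ap p
    apply (simp add: field_simps)
    using a2 by algebra
qed

lemma Bcond:
  fixes n :: nat and a :: real
  assumes a2: "a*a = 2*a+1" and ap: "a > 2" and n: "n \<ge> 1"
  shows "a*(2*real n-1)/2 \<le> 2*real n - 1 + (real n)^2 / (a*(2*real (n+1)-1)/2 + 1/(2*a*(2*real (n+1)+1)))"
proof -
  define U where "U = a*(2*real (n+1)-1)/2 + 1/(2*a*(2*real (n+1)+1))"
  have Upos: "U > 0" unfolding U_def using ap by (auto intro!: add_pos_pos)
  have e1: "a*(2*real n-1)/2 - (2*real n - 1) = (2*real n - 1)/(2*a)"
    using ap apply (simp add: field_simps) using a2 by algebra
  have p: "a * 6 + a * (real n * 4) > 0" "a * 3 + a * (real n * 2) > 0" using ap by (auto intro!: add_pos_nonneg)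
  have "(2*real n - 1) * U = a*(4*(real n)^2 - 1)/2 + (2*real n-1)/(2*a*(2*real n+3))"
    unfolding U_def using ap p by (simp add: field_simps power2_eq_square)
  also have "(2*real n-1)/(2*a*(2*real n+3)) \<le> a/2"
  proof -
    have "(2*real n-1)/(2*a*(2*real n+3)) \<le> (2*real n+3)/(2*a*(2*real n+3))"
      using ap by (intro divide_right_mono) auto
    also have "\<dots> = 1/(2*a)" using ap p by (simp add: field_simps)
    also have "\<dots> \<le> a/2" using ap a2 by (simp add: field_simps)
    finally show ?thesis .
  qed
  finally have "(2*real n - 1) * U \<le> 2*a*(real n)^2" by (simp add: field_simps)
  hence "(2*real n - 1)/(2*a) \<le> (real n)^2 / U" using Upos ap
    by (simp add: field_simps)
  thus ?thesis using e1 unfolding U_def by linarith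
qed

lemma contr:
  fixes c x y :: real
  assumes "c \<ge> 0" "x \<ge> 2*c+1" "y \<ge> 2*c+1" "x \<le> y"
  shows "c^2/x - c^2/y \<le> (y-x)/4"
proof -
  have xp: "x > 0" "y > 0" using assms by auto
  have "c^2/x - c^2/y = c^2*(y-x)/(x*y)" using xp by (simp add: field_simps)
  also have "\<dots> \<le> (y-x)/4"
  proof -
    have "(2*c+1)*(2*c+1) \<le> x*y" using assms by (intro mult_mono) auto
    moreover have "(2*c+1)*(2*c+1) = 4*c^2 + 4*c + 1" by (simp add: power2_eq_square algebra_simps)
    ultimately have "4*c^2 \<le> x*y" using assms(1) by linarith
    hence "(4*c^2)*(y-x) \<le> (x*y)*(y-x)" using assms(4) by (intro mult_right_mono) auto
    hence "c^2*(y-x)*4 \<le> (y-x)*(x*y)" by (simp add: algebra_simps)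
    thus ?thesis using xp by (simp add: field_simps)
  qed
  finally show ?thesis .
qed

lemma floorpart:
  fixes n :: nat and r :: real
  assumes n: "n \<ge> 1"
  and lo: "r \<ge> (1 + sqrt 2)*(2*real n-1)/2"
  and hi: "r \<le> (1 + sqrt 2)*(2*real n-1)/2 + 1/(2*(1 + sqrt 2)*(2*real n+1))"
  shows "\<lfloor>r + 1/2\<rfloor> = \<lfloor>(1 + sqrt 2) * real n - sqrt 2 / 2\<rfloor>"
proof -
  define s where "s = sqrt (2::real)"
  define x where "x = (1 + s) * real n - s / 2"
  define e where "e = 1/(2*(1 + s)*(2*real n+1))"
  have s2: "s*s = 2" unfolding s_def by simp
  have s1: "s > 1" unfolding s_def by (simp add: real_less_rsqrt)
  have s15: "s < 3/2"
  proof (rule ccontr)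
    assume "\<not> s < 3/2"
    hence "(3/2)*(3/2) \<le> s*s" by (intro mult_mono) auto
    thus False using s2 by simp
  qed
  have xe: "x = (1 + s)*(2*real n-1)/2 + 1/2" unfolding x_def by (simp add: field_simps)
  have lo': "r + 1/2 \<ge> x" using lo xe s_def by simp
  have hi': "r + 1/2 \<le> x + e" using hi xe s_def e_def by simp
  have "\<lfloor>x\<rfloor> \<le> \<lfloor>r+1/2\<rfloor>" using lo' by (simp add: floor_mono)
  moreover have "\<lfloor>r+1/2\<rfloor> \<le> \<lfloor>x\<rfloor>"
  proof (rule ccontr)
    assume neg: "\<not> ?thesis"
    define m where "m = \<lfloor>r+1/2\<rfloor>"
    have mx: "real_of_int m > x" using neg unfolding m_def by linarith
    have mr: "real_of_int m \<le> x + e" using hi' unfolding m_def by linarith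
    define J where "J = m - int n"
    define T where "T = 2 * int n - 1"
    have Tp: "T \<ge> 1" unfolding T_def using n by simp
    have mxe: "real_of_int m - x = (2*real_of_int J - s*real_of_int T)/2"
      unfolding J_def T_def x_def by (simp add: field_simps)
    have "(2*real_of_int J - s*real_of_int T)/2 > 0" using mx mxe by linarith
    hence gt: "2*real_of_int J > s*real_of_int T" by simp
    have Tpos: "real_of_int T \<ge> 1" using Tp by simp
    have stp: "s * real_of_int T > 0" using s1 Tpos by simp
    have "(2*real_of_int J)*(2*real_of_int J) > (s*real_of_int T)*(s*real_of_int T)"
      using gt stp by (meson mult_strict_mono' less_imp_le)
    moreover have "(s*real_of_int T)*(s*real_of_int T) = (s*s)*(real_of_int T*real_of_int T)" by (simp add: algebra_simps)
    hence "(s*real_of_int T)*(s*real_of_int T) = 2*(real_of_int T*real_of_int T)" using s2 by simp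
    ultimately have "real_of_int (2*J*J) > real_of_int (T*T)" by simp
    hence "2*J*J > T*T" by (simp only: of_int_less_iff)
    hence "2*J*J - T*T \<ge> 1" by linarith
    hence "real_of_int (2*J*J - T*T) \<ge> 1" by (metis of_int_1 of_int_le_iff)
    moreover have "real_of_int (2*J*J - T*T) = 2*(real_of_int J*real_of_int J) - real_of_int T*real_of_int T" by simp
    ultimately have "2*(real_of_int J*real_of_int J) - real_of_int T*real_of_int T \<ge> 1" by simp
    hence d: "4*real_of_int J*real_of_int J - 2*real_of_int T*real_of_int T \<ge> 2" by linarith
    define k where "k = 2*real_of_int J"
    define t where "t = real_of_int T"
    have "(k - s*t)*(k + s*t) = k*k - (s*s)*(t*t)" by (simp add: algebra_simps)
    also have "\<dots> = 4*real_of_int J*real_of_int J - 2*real_of_int T*real_of_int T"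
      unfolding s2 k_def t_def by simp
    finally have kt: "(k - s*t)*(k + s*t) \<ge> 2" using d by simp
    have mxk: "real_of_int m - x = (k - s*t)/2" using mxe unfolding k_def t_def by simp
    have kst: "k > s*t" using gt unfolding k_def t_def .
    have tpos: "t \<ge> 1" using Tpos t_def by simp
    have tn: "t = 2*real n - 1" unfolding t_def T_def using n by simp
    have ep: "e > 0" unfolding e_def using s1 by simp
    have "real_of_int m - x > e"
    proof (cases "k - s*t \<ge> 1")
      case True
      have "2*2 \<le> 2*(1+s)" using s1 by simp
      moreover have "(3::real) \<le> 2*real n+1" using n by simp
      ultimately have "(2*2)*3 \<le> (2*(1+s))*(2*real n+1)" by (intro mult_mono) auto
      hence "1/(2*(1+s)*(2*real n+1)) \<le> 1/12" by (intro divide_left_mono) auto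
      hence "e \<le> 1/12" unfolding e_def .
      thus ?thesis using True mxk by argo
    next
      case False
      have stp': "0 < s*t" using stp t_def by simp
      have kp: "k + s*t > 0" using kst stp' by argo
      have "k - s*t \<ge> 2/(k+s*t)" using kt kp by (simp add: field_simps)
      moreover have "2/(k+s*t) > 2*e"
      proof -
        have "2*(1+s)*(2*real n+1) = 2*t + 2*(s*t) + 4 + 4*s" unfolding tn by (simp add: algebra_simps)
        hence "k + s*t < 2*(1+s)*(2*real n+1)" using False s1 tpos by argo
        hence "2/(2*(1+s)*(2*real n+1)) < 2/(k+s*t)" using kp
          by (intro divide_strict_left_mono) auto
        thus ?thesis unfolding e_def by simp
      qed
      ultimately show ?thesis using mxk by argo
    qed
    thus False using mr by linarith
  qed
  ultimately show ?thesis unfolding x_def s_def by linarith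
qed

theorem mainTheorem8:
  fixes r :: "nat \<Rightarrow> real"
  assumes pos: "\<And>n. n \<ge> 1 \<Longrightarrow> r n > 0"
    and rec: "\<And>n. n \<ge> 1 \<Longrightarrow> r n = 2 * real n - 1 + (real n)^2 / r (n + 1)"
    and n: "n \<ge> 1"
  shows "\<lfloor>r n + 1/2\<rfloor> = \<lfloor>(1 + sqrt 2) * real n - sqrt 2 / 2\<rfloor>"
proof -
  define a where "a = 1 + sqrt (2::real)"
  have a2: "a*a = 2*a+1" unfolding a_def by (simp add: algebra_simps)
  have agt: "a > 2" unfolding a_def by (simp add: real_less_rsqrt)
  define L where "L m = a*(2*real m-1)/2" for m
  define U where "U m = L m + 1/(2*a*(2*real m+1))" for m
  define v where "v m = max (r m - U m) (L m - r m)" for m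
  have big: "r (m+1) \<ge> 2*real m+1" if "m \<ge> 1" for m
  proof -
    have "r (m+1) = 2*real (m+1) - 1 + (real (m+1))^2 / r (m+1+1)" using rec[of "m+1"] by simp
    moreover have "(real (m+1))^2 / r (m+1+1) > 0" using pos[of "m+2"] by simp
    ultimately show ?thesis by simp
  qed
  have rb: "r m \<le> 3*real m" if "m \<ge> 1" for m
  proof -
    have "(real m)^2 / r (m+1) \<le> (real m)^2 / (2*real m+1)"
      using big[OF that] by (intro divide_left_mono) auto
    also have "\<dots> \<le> real m" by (simp add: field_simps power2_eq_square)
    finally show ?thesis using rec[OF that] by linarith
  qed
  have Lge: "L m \<ge> 2*real m - 1" if "m \<ge> 1" for m
  proof -
    have "2*(2*real m - 1) \<le> a*(2*real m-1)" using agt that by (intro mult_right_mono) auto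
    thus ?thesis unfolding L_def by simp
  qed
  have Ule: "U m \<ge> L m" for m unfolding U_def using agt by simp
  have Uid': "U m = 2*real m - 1 + (real m)^2 / L (m+1)" for m
    unfolding U_def L_def using Uid[OF a2, of m] agt by simp
  have Bc: "L m \<le> 2*real m - 1 + (real m)^2 / U (m+1)" if "m \<ge> 1" for m
    unfolding U_def L_def using Bcond[OF a2 agt that] by simp
  have vb: "v m \<le> 3*real m" if "m \<ge> 1" for m
  proof -
    have "U m \<ge> 0" "L m \<ge> 0" using Ule[of m] Lge[OF that] that by auto
    moreover have "L m \<le> 3 * real m"
    proof -
      have "sqrt (2::real) \<le> sqrt 4" by (simp only: real_sqrt_le_iff)
      hence "sqrt (2::real) \<le> 2" by (simp only: real_sqrt_four)
      hence "a \<le> 3" unfolding a_def by simp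
      hence "a*(2*real m-1) \<le> 3*(2*real m - 1)" using that by (intro mult_right_mono) auto
      thus ?thesis unfolding L_def using that by simp
    qed
    ultimately show ?thesis unfolding v_def using rb[OF that] pos[OF that] by simp
  qed
  have step: "v (m+1) \<ge> 4 * v m" if m: "m \<ge> 1" and vp: "v m > 0" for m
  proof -
    have r1: "r (m+1) \<ge> 2*real m + 1" using big[OF m] .
    have L1: "L (m+1) \<ge> 2*real m + 1" using Lge[of "m+1"] by simp
    have U1: "U (m+1) \<ge> 2*real m + 1" using L1 Ule[of "m+1"] by linarith
    have rm: "r m = 2*real m - 1 + (real m)^2 / r (m+1)" using rec[OF m] .
    show ?thesis
    proof (cases "r m - U m > 0")
      case True
      have d: "r m - U m = (real m)^2 / r (m+1) - (real m)^2 / L (m+1)" using rm Uid'[of m] by simp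
      have "r (m+1) \<le> L (m+1)"
      proof (rule ccontr)
        assume "\<not> ?thesis"
        hence "(real m)^2 / r (m+1) \<le> (real m)^2 / L (m+1)" using L1
          by (intro divide_left_mono) auto
        thus False using True d by linarith
      qed
      hence "r m - U m \<le> (L (m+1) - r (m+1))/4" using d contr[of "real m" "r (m+1)" "L (m+1)"] r1 L1 by simp
      moreover have "v m = r m - U m" unfolding v_def using True Ule[of m] by simp
      moreover have "L (m+1) - r (m+1) \<le> v (m+1)" unfolding v_def by simp
      ultimately show ?thesis by argo
    next
      case False
      hence F: "L m - r m > 0" "v m = L m - r m" using vp unfolding v_def by auto
      have d: "L m - r m \<le> (real m)^2 / U (m+1) - (real m)^2 / r (m+1)" using rm Bc[OF m] by simp
      have "U (m+1) \<le> r (m+1)"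
      proof (rule ccontr)
        assume "\<not> ?thesis"
        hence "(real m)^2 / U (m+1) \<le> (real m)^2 / r (m+1)" using r1
          by (intro divide_left_mono) auto
        thus False using F d by linarith
      qed
      hence c: "(real m)^2 / U (m+1) - (real m)^2 / r (m+1) \<le> (r (m+1) - U (m+1))/4"
        using r1 U1 by (intro contr) auto
      hence "L m - r m \<le> (r (m+1) - U (m+1))/4" using d by argo
      moreover have "r (m+1) - U (m+1) \<le> v (m+1)" unfolding v_def by simp
      ultimately show ?thesis using F by argo
    qed
  qed
  have iter: "v (n+k) \<ge> 4^k * v n" if "v n > 0" for k
  proof (induction k)
    case 0 show ?case by simp
  next
    case (Suc k)
    have "4^k * v n > 0" using that by simp
    hence vp: "v (n+k) > 0" using Suc.IH by linarith
    have "4 * v (n+k) \<le> v (n+k+1)" using step[OF _ vp] n by simp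
    thus ?case using Suc.IH by simp
  qed
  have vn: "v n \<le> 0"
  proof (rule ccontr)
    assume "\<not> v n \<le> 0"
    hence vp: "v n > 0" by simp
    obtain k where k: "3*(real n+1)/v n < 2^k" using real_arch_pow[of 2 "3*(real n+1)/v n"] by auto
    have k2: "3*(real n+1) < 2^k * v n" using k vp by (simp add: field_simps)
    have "real k + 1 \<le> 2^k"
    proof -
      have "k + 1 \<le> (2::nat)^k" using Suc_leI[OF less_exp[of k]] by simp
      hence "real (k+1) \<le> real ((2::nat)^k)" by (simp only: of_nat_le_iff)
      thus ?thesis by simp
    qed
    have "3*(real n + real k) \<le> 3*(real n+1)*(real k + 1)" by (simp add: algebra_simps)
    also have "\<dots> < (2^k * v n) * 2^k"
      by (rule mult_less_le_imp_less) (use k2 \<open>real k + 1 \<le> 2^k\<close> in auto)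
    also have "\<dots> = 4^k * v n" by (simp add: power_mult_distrib[symmetric] algebra_simps)
    also have "\<dots> \<le> v (n+k)" using iter[OF vp] .
    also have "\<dots> \<le> 3*real (n+k)" using vb[of "n+k"] n by simp
    finally show False by simp
  qed
  hence "L n \<le> r n" "r n \<le> U n" unfolding v_def by auto
  thus ?thesis using floorpart[OF n, of "r n"] unfolding L_def U_def a_def by simp
qed

end
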